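(* Fix $\xi\in[0,0.13]$ and let $y_i\in[\cos(2\pi/9),1)$ for all $i\in\{2,3,5,6\}$. Then for any $j\in\{2,3,5,6\}$ with $y_j,y_{j'}\le\cos(2\pi/10)$, one has $$\frac{\partial\psi_\xi}{\partial y_j}(\delta,y_2,y_3,y_5,y_6)\ge0\quad\text{and}\quad\frac{\partial\psi_\xi}{\partial y_{j'}}(\delta,y_2,y_3,y_5,y_6)\ge0$$ for all $\delta\in[0,0.13]$.
   Context: Pairing: $2'=6$, $3'=5$, $5'=3$, $6'=2$. For $\xi\ge0$, $y\in(0,1)$: $\eta_\xi(y)=\frac{-2-5y+(1+\xi)^2+\sqrt{(2+5y-(1+\xi)^2)^2+4(2+y)(1-y)(1+\xi)^2}}{2+y}$. Let $b(y)=\frac{16}{y+1}-7$, $c_n=\cos(2\pi/n)$, $\beta(y)=b(y)$ on $[c_{10},1]$ and $\beta(y)=\frac{(2-b(c_{10}))b(y)-(2-b(c_9))b(c_{10})}{b(c_9)-b(c_{10})}$ on $[c_9,c_{10}]$. Define $$G(\delta,\eta_2,\eta_3,\eta_5,\eta_6,\beta_2,\beta_3,\beta_5,\beta_6)=\frac{1+\dfrac{\delta[(1+\eta_2)(1+\eta_5)+(1+\eta_3)(1+\eta_6)]-2\delta(\delta+2)}{(2+\eta_2+\eta_6)(2+\eta_3+\eta_5)}}{\sqrt{1+\dfrac{\delta^2+2(1+\beta_2\beta_6)\delta}{(2+\eta_2+\eta_6)^2}}\sqrt{1+\dfrac{\delta^2+2(1+\beta_3\beta_5)\delta}{(2+\eta_3+\eta_5)^2}}}$$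 and $\psi_\xi(\delta,y_2,y_3,y_5,y_6)=G(\delta,\eta_\xi(y_2),\eta_\xi(y_3),\eta_\xi(y_5),\eta_\xi(y_6),\beta(y_2),\beta(y_3),\beta(y_5),\beta(y_6))$. *)

theory Defs
  imports "HOL-Analysis.Analysis"
begin

definition pairing :: "nat \<Rightarrow> nat" where
  "pairing j = (if j = 2 then 6 else if j = 3 then 5 else if j = 5 then 3 else if j = 6 then 2 else j)"

definition eta :: "real \<Rightarrow> real \<Rightarrow> real" where
  "eta \<xi> y = (-2 - 5*y + (1+\<xi>)^2
      + sqrt ((2 + 5*y - (1+\<xi>)^2)^2 + 4*(2+y)*(1-y)*(1+\<xi>)^2)) / (2+y)"

definition bfun :: "real \<Rightarrow> real" where
  "bfun y = 16 / (y+1) - 7"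

definition cn :: "nat \<Rightarrow> real" where
  "cn n = cos (2*pi / real n)"

definition beta :: "real \<Rightarrow> real" where
  "beta y = (if cn 10 \<le> y then bfun y
     else ((2 - bfun (cn 10)) * bfun y - (2 - bfun (cn 9)) * bfun (cn 10))
          / (bfun (cn 9) - bfun (cn 10)))"

definition G :: "real \<Rightarrow> real \<Rightarrow> real \<Rightarrow> real \<Rightarrow> real \<Rightarrow> real \<Rightarrow> real \<Rightarrow> real \<Rightarrow> real \<Rightarrow> real" where
  "G \<delta> e2 e3 e5 e6 b2 b3 b5 b6 =
     (1 + (\<delta> * ((1+e2)*(1+e5) + (1+e3)*(1+e6)) - 2*\<delta>*(\<delta>+2)) / ((2+e2+e6)*(2+e3+e5)))
     / (sqrt (1 + (\<delta>^2 + 2*(1 + b2*b6)*\<delta>) / (2+e2+e6)^2)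
        * sqrt (1 + (\<delta>^2 + 2*(1 + b3*b5)*\<delta>) / (2+e3+e5)^2))"

definition psi :: "real \<Rightarrow> real \<Rightarrow> (nat \<Rightarrow> real) \<Rightarrow> real" where
  "psi \<xi> \<delta> y = G \<delta> (eta \<xi> (y 2)) (eta \<xi> (y 3)) (eta \<xi> (y 5)) (eta \<xi> (y 6))
                       (beta (y 2)) (beta (y 3)) (beta (y 5)) (beta (y 6))"

end

theory Submission
  imports Defs
begin


lemma c9_bounds: "766/1000 \<le> cn 9 \<and> cn 9 \<le> 7661/10000"
proof -
  define c where "c = cos (2*pi/9)"
  have cn: "cn 9 = c" by (simp add: cn_def c_def)
  have "cos (3 * (2*pi/9)) = 4*c^3 - 3*c" unfolding c_def by (rule cos_treble_cos)
  moreover have "cos (3 * (2*pi/9)) = - 1/2"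
  proof -
    have "3 * (2*pi/9) = pi - pi/3" by simp
    then have "cos (3 * (2*pi/9)) = cos (pi - pi/3)" by (simp only:)
    then show ?thesis by (simp only: cos_pi_minus cos_60)
  qed
  ultimately have eq: "8*c^3 - 6*c + 1 = 0" by simp
  have "cos (pi/4) < c" unfolding c_def by (rule cos_monotone_0_pi) (auto simp: pi_gt_zero)
  moreover have "7/5 < sqrt 2" by (rule real_less_rsqrt) (simp add: power2_eq_square)
  ultimately have lo: "7/10 < c" using cos_45 by simp
  have c2: "c*c > 49/100" using lo mult_strict_mono[of "7/10" c "7/10" c] by simp
  have "766/1000 \<le> c"
  proof (rule ccontr)
    assume "\<not> 766/1000 \<le> c"
    then have "(766/1000 - c) * (8*(766/1000*(766/1000) + 766/1000*c + c*c) - 6) > 0"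
      using lo c2 by (intro mult_pos_pos) auto
    moreover have "(766/1000 - c) * (8*(766/1000*(766/1000) + 766/1000*c + c*c) - 6)
       = (8*(766/1000)^3 - 6*(766/1000) + 1) - (8*c^3 - 6*c + 1)"
      by (simp add: field_simps power3_eq_cube)
    ultimately show False using eq by (simp add: power3_eq_cube)
  qed
  moreover have "c \<le> 7661/10000"
  proof (rule ccontr)
    assume "\<not> c \<le> 7661/10000"
    then have "(c - 7661/10000) * (8*(7661/10000*(7661/10000) + 7661/10000*c + c*c) - 6) > 0"
      using lo c2 by (intro mult_pos_pos) auto
    moreover have "(c - 7661/10000) * (8*(7661/10000*(7661/10000) + 7661/10000*c + c*c) - 6)
       = (8*c^3 - 6*c + 1) - (8*(7661/10000)^3 - 6*(7661/10000) + 1)"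
      by (simp add: field_simps power3_eq_cube)
    ultimately show False using eq by (simp add: power3_eq_cube)
  qed
  ultimately show ?thesis by (simp add: cn)
qed

lemma c10_bounds: "80901/100000 \<le> cn 10 \<and> cn 10 \<le> 80903/100000"
proof -
  define c where "c = cos (pi/5)"
  have cn: "cn 10 = c" by (simp add: cn_def c_def)
  have "cos (3 * (pi/5)) = 4*c^3 - 3*c" unfolding c_def by (rule cos_treble_cos)
  moreover have "cos (2 * (pi/5)) = 2*c^2 - 1" unfolding c_def by (rule cos_double_cos)
  moreover have "cos (3 * (pi/5)) = - cos (2 * (pi/5))"
  proof -
    have "3 * (pi/5) = pi - 2 * (pi/5)" by simp
    then have "cos (3 * (pi/5)) = cos (pi - 2 * (pi/5))" by (simp only:)
    then show ?thesis by (simp only: cos_pi_minus)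
  qed
  ultimately have "(c+1)*(4*c^2 - 2*c - 1) = 0" by (simp add: algebra_simps power2_eq_square power3_eq_cube)
  moreover have "cos (pi/4) < c" unfolding c_def by (rule cos_monotone_0_pi) (auto simp: pi_gt_zero)
  moreover have "7/5 < sqrt 2" by (rule real_less_rsqrt) (simp add: power2_eq_square)
  ultimately have lo: "7/10 < c" and eq: "4*c*c - 2*c - 1 = 0" using cos_45 by (auto simp: power2_eq_square)
  have "80901/100000 \<le> c"
  proof (rule ccontr)
    assume "\<not> 80901/100000 \<le> c"
    then have "(80901/100000 - c) * (4*(80901/100000 + c) - 2) > 0"
      using lo by (intro mult_pos_pos) auto
    then show False using eq by (simp add: algebra_simps)
  qed
  moreover have "c \<le> 80903/100000"
  proof (rule ccontr)
    assume "\<not> c \<le> 80903/100000"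
    then have "(c - 80903/100000) * (4*(80903/100000 + c) - 2) > 0"
      using lo by (intro mult_pos_pos) auto
    then show False using eq by (simp add: algebra_simps)
  qed
  ultimately show ?thesis by (simp add: cn)
qed


lemma eta_deriv_raw:
  fixes \<xi> y :: real
  defines "a \<equiv> (1+\<xi>)^2"
  defines "S \<equiv> (2 + 5*y - a)^2 + 4*(2+y)*(1-y)*a"
  assumes y0: "0 \<le> y" and y1: "y < 1" and x0: "0 \<le> \<xi>"
  shows "((\<lambda>y. eta \<xi> y) has_real_derivative
     (-(eta \<xi> y ^2 + 10 * eta \<xi> y + 4*a) / (2 * sqrt S))) (at y)"
proof -
  have a1: "a \<ge> 1" unfolding a_def using x0 by (intro one_le_power) simp
  have Spos: "S > 0" unfolding S_def using a1 y0 y1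
    by (intro add_nonneg_pos) (auto intro!: mult_pos_pos)
  define r where "r = sqrt S"
  have rpos: "r > 0" using Spos r_def by simp
  have r2: "r^2 = S" using Spos r_def by simp
  have dS: "((\<lambda>y. (2+5*y-a)^2 + 4*(2+y)*(1-y)*a) has_real_derivative (10*(2+5*y-a) - 4*a*(1+2*y))) (at y)"
    by (auto intro!: derivative_eq_intros simp: algebra_simps)
  have dr: "((\<lambda>y. sqrt ((2+5*y-a)^2 + 4*(2+y)*(1-y)*a)) has_real_derivative
             (10*(2+5*y-a) - 4*a*(1+2*y)) * (inverse r / 2)) (at y)"
    using DERIV_chain2[OF DERIV_real_sqrt[OF Spos[unfolded S_def]] dS] r_def S_def by (simp add: mult.commute)
  have dn: "((\<lambda>y. -2 - 5*y + a + sqrt ((2+5*y-a)^2 + 4*(2+y)*(1-y)*a)) has_real_derivative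
             (-5 + (10*(2+5*y-a) - 4*a*(1+2*y)) * (inverse r / 2))) (at y)"
  proof -
    have "((\<lambda>y. -2 - 5*y + a) has_real_derivative -5) (at y)"
      by (auto intro!: derivative_eq_intros)
    from DERIV_add[OF this dr] show ?thesis by simp
  qed
  have dd: "((\<lambda>y. 2 + y) has_real_derivative 1) (at y)"
    by (auto intro!: derivative_eq_intros)
  have de: "((\<lambda>y. eta \<xi> y) has_real_derivative
      ((-5 + (10*(2+5*y-a) - 4*a*(1+2*y)) * (inverse r / 2)) * (2+y) - (-2 - 5*y + a + r) * 1) / ((2+y)*(2+y))) (at y)"
    using DERIV_divide[OF dn dd] y0 unfolding eta_def a_def r_def S_def by simp
  have ee: "eta \<xi> y = (-2 - 5*y + a + r) / (2+y)" unfolding eta_def a_def r_def S_def by simp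
  define p where "p = 2 + y"
  define q where "q = 2 + 5*y - a"
  have pp: "p > 0" using y0 p_def by simp
  have Sq: "S = q^2 + 4*p*(1-y)*a" unfolding S_def p_def q_def by simp
  define X where "X = (-10*r + (10*q - 4*a*(1+2*y)))*p - 2*r*(r-q)"
  define Y where "Y = -((r-q)^2 + 10*(r-q)*p + 4*a*p^2)"
  have XY: "X - Y = q^2 + 4*p*(1-y)*a - r^2"
    unfolding X_def Y_def p_def by (simp add: algebra_simps power2_eq_square)
  have XY': "X = Y" using XY r2 Sq by simp
  have L: "((-5 + (10*(2+5*y-a) - 4*a*(1+2*y)) * (inverse r / 2)) * (2+y) - (-2 - 5*y + a + r) * 1) / ((2+y)*(2+y))
        = X / (2*r*p^2)"
    unfolding X_def p_def q_def using rpos y0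
    by (simp add: field_simps power2_eq_square)
  have R: "-(eta \<xi> y ^2 + 10 * eta \<xi> y + 4*a) / (2 * r) = Y / (2*r*p^2)"
  proof -
    have ee': "eta \<xi> y = (r - q) / p" unfolding ee p_def q_def by (simp add: algebra_simps)
    show ?thesis unfolding ee' Y_def using rpos pp
      by (simp add: field_simps power2_eq_square)
  qed
  have "((-5 + (10*(2+5*y-a) - 4*a*(1+2*y)) * (inverse r / 2)) * (2+y) - (-2 - 5*y + a + r) * 1) / ((2+y)*(2+y))
        = -(eta \<xi> y ^2 + 10 * eta \<xi> y + 4*a) / (2 * r)"
    using L R XY' by simp
  then show ?thesis using de r_def by simp
qed
lemma eta_bounds:
  fixes \<xi> y :: real
  assumes x0: "0 \<le> \<xi>" and x1: "\<xi> \<le> 13/100" and y0: "766/1000 \<le> y" and y1: "y < 1"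
  shows "0 \<le> eta \<xi> y \<and> eta \<xi> y \<le> 13/100"
proof -
  define a where "a = (1+\<xi>)^2"
  define p where "p = 2 + y"
  define q where "q = 2 + 5*y - a"
  define S where "S = q^2 + 4*p*(1-y)*a"
  have a1: "a \<ge> 1" unfolding a_def using x0 by (intro one_le_power) simp
  have a2: "a \<le> 113/100 * (113/100)" unfolding a_def power2_eq_square using x0 x1
    by (intro mult_mono) auto
  have pp: "p > 0" using y0 p_def by simp
  have qp: "q \<ge> 0" using y0 a2 q_def by simp
  have ee: "eta \<xi> y = (sqrt S - q) / p" unfolding eta_def S_def p_def q_def a_def
    by (simp add: algebra_simps)
  have Sq: "S \<ge> q^2" unfolding S_def using pp y1 a1 by simp
  then have "sqrt S \<ge> q" using qp real_sqrt_le_mono[OF Sq] by simp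
  then have lo: "0 \<le> eta \<xi> y" unfolding ee using pp by simp
  have E: "0 \<le> 169/10000*p + 26/100*q - 4*(1-y)*a"
  proof -
    have "a*(426/100 - 4*y) \<le> 113/100 * (113/100) * (426/100 - 4*y)"
      using a2 y1 by (intro mult_right_mono) auto
    also have "... = 5439594/1000000 - 51076/10000*y" by (simp add: field_simps)
    finally have "a*(426/100 - 4*y) \<le> 5439594/1000000 - 51076/10000*y" .
    moreover have "169/10000*p + 26/100*q - 4*(1-y)*a = 5538/10000 + 13169/10000*y - a*(426/100 - 4*y)"
      unfolding p_def q_def by (simp add: field_simps)
    ultimately show ?thesis using y0 by linarith
  qed
  have "(13/100*p + q)^2 - S = p * (169/10000*p + 26/100*q - 4*(1-y)*a)"
    unfolding S_def by (simp add: algebra_simps power2_eq_square)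
  also have "... \<ge> 0" using E pp by simp
  finally have "S \<le> (13/100*p + q)^2" by simp
  then have "sqrt S \<le> 13/100*p + q" using qp pp real_sqrt_le_mono by fastforce
  then have "sqrt S - q \<le> 13/100*p" by simp
  then have hi: "eta \<xi> y \<le> 13/100" unfolding ee using pp by (simp add: divide_le_eq)
  show ?thesis using lo hi by simp
qed

lemma eta_deriv:
  fixes \<xi> y :: real
  assumes x0: "0 \<le> \<xi>" and x1: "\<xi> \<le> 13/100" and y0: "766/1000 \<le> y" and y1: "y < 1"
  shows "\<exists>ep. ((\<lambda>y. eta \<xi> y) has_real_derivative ep) (at y) \<and> -72/100 \<le> ep \<and> ep \<le> 0"
proof -
  define a where "a = (1+\<xi>)^2"
  define S where "S = (2 + 5*y - a)^2 + 4*(2+y)*(1-y)*a"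
  have a1: "a \<ge> 1" unfolding a_def using x0 by (intro one_le_power) simp
  have a2: "a \<le> 113/100 * (113/100)" unfolding a_def power2_eq_square using x0 x1
    by (intro mult_mono) auto
  have d: "((\<lambda>y. eta \<xi> y) has_real_derivative
     (-(eta \<xi> y ^2 + 10 * eta \<xi> y + 4*a) / (2 * sqrt S))) (at y)"
    unfolding a_def S_def using y0 y1 x0 by (intro eta_deriv_raw) auto
  define e where "e = eta \<xi> y"
  have e: "0 \<le> e" "e \<le> 13/100" using eta_bounds[OF x0 x1 y0 y1] e_def by auto
  have r: "sqrt S = e*(2+y) + (2 + 5*y - a)" unfolding e_def eta_def a_def S_def using y0
    by (simp add: field_simps)
  have r1: "sqrt S \<ge> 45531/10000" unfolding r using e y0 a2 by (simp add: add_increasing)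
  have num: "e^2 + 10*e + 4*a \<le> 64245/10000"
  proof -
    have "e*e \<le> 13/100*(13/100)" using e by (intro mult_mono) auto
    then show ?thesis using e a2 by (simp add: power2_eq_square)
  qed
  have num0: "e^2 + 10*e + 4*a \<ge> 0" using e a1 by simp
  have "(e^2 + 10*e + 4*a) / (2 * sqrt S) \<le> (64245/10000) / (2*(45531/10000))"
    using num num0 r1 by (intro frac_le) auto
  also have "... \<le> 72/100" by simp
  finally have h: "(e^2 + 10*e + 4*a) / (2 * sqrt S) \<le> 72/100" .
  have "-(e^2 + 10*e + 4*a) / (2 * sqrt S) = - ((e^2 + 10*e + 4*a) / (2 * sqrt S))"
    by (simp only: minus_divide_left)
  then have "-(e^2 + 10*e + 4*a) / (2 * sqrt S) \<ge> -72/100" using h by linarith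
  moreover have "-(e^2 + 10*e + 4*a) / (2 * sqrt S) \<le> 0" using num0 r1 by (intro divide_nonpos_pos) (linarith, linarith)
  ultimately show ?thesis using d e_def by blast
qed



lemma core_ineq:
  fixes d e e3 e5 e6 bb b6 ep bp :: real
  assumes d: "0 \<le> d" "d \<le> 13/100"
    and e: "0 \<le> e" "e \<le> 13/100" and e3: "0 \<le> e3" "e3 \<le> 13/100"
    and e5: "0 \<le> e5" "e5 \<le> 13/100" and e6: "0 \<le> e6" "e6 \<le> 13/100"
    and bb: "0 \<le> bb" "bb \<le> 2" and b6: "1844/1000 \<le> b6" "b6 \<le> 2"
    and ep: "-72/100 \<le> ep" "ep \<le> 0" and bp: "bp \<le> -35/10"
  defines "s \<equiv> 2+e+e6" and "T \<equiv> 2+e3+e5"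
  defines "M \<equiv> (1+e)*(1+e5)+(1+e3)*(1+e6) - 2*(d+2)"
  defines "N \<equiv> 1 + d*M/(s*T)"
  defines "c0 \<equiv> d + 2*(1+bb*b6)"
  defines "A \<equiv> 1 + d*c0/s^2"
  defines "K \<equiv> (1+e5)* s - M"
  shows "0 \<le> (d*ep*K/(s^2*T)) * A - N * ((2*d*b6*bp)/s^2 - 2*(d*c0)*ep/s^3) / 2"
proof -
  have s2: "s \<ge> 2" using e e6 s_def by simp
  have T2: "T \<ge> 2" using e3 e5 T_def by simp
  have sT: "s*T \<ge> 4" using mult_mono[OF s2 T2] s2 by simp
  have p1: "(1+e)*(1+e5) \<le> 113/100*(113/100)" using e e5 by (intro mult_mono) auto
  have p2: "(1+e3)*(1+e6) \<le> 113/100*(113/100)" using e3 e6 by (intro mult_mono) auto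
  have p3: "(1+e)*(1+e5) \<ge> 1" using e e5 using mult_mono[of 1 "1+e" 1 "1+e5"] by simp
  have p4: "(1+e3)*(1+e6) \<ge> 1" using e3 e6 mult_mono[of 1 "1+e3" 1 "1+e6"] by simp
  have Mneg: "M \<le> 0" using p1 p2 d M_def by simp
  have Mlo: "M \<ge> -226/100" using p3 p4 d M_def by simp
  have N1: "N \<le> 1" unfolding N_def using Mneg d sT
    by (simp add: divide_nonpos_pos mult_nonneg_nonpos)
  have "d*M \<ge> 13/100 * (-226/100)"
  proof -
    have "d*(-M) \<le> 13/100 * (226/100)" using d Mlo Mneg by (intro mult_mono) auto
    then show ?thesis by simp
  qed
  then have "(-(d*M))/(s*T) \<le> 13/100 * (226/100) / 4"
    using sT by (intro frac_le) auto
  then have "d*M/(s*T) \<ge> 13/100 * (-226/100) / 4" by simp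
  then have N0: "N \<ge> 92/100" unfolding N_def by simp
  have bb6: "bb*b6 \<le> 4" using bb b6 mult_mono[of bb 2 b6 2] by simp
  have bb6': "bb*b6 \<ge> 0" using bb b6 by simp
  have c0: "0 \<le> c0" "c0 \<le> 1013/100" using bb6 bb6' d c0_def by auto
  have dc0: "d*c0 \<le> 13/100*(1013/100)" using mult_mono[OF d(2) c0(2)] d c0 by simp
  have "s^2 \<ge> 4" using power_mono[OF s2, of 2] by simp
  then have h: "d*c0/s^2 \<le> 13/100*(1013/100)/4" using dc0 d c0
    by (intro frac_le) auto
  have A1: "A \<le> 13293/10000" unfolding A_def using h by linarith
  have A2: "A \<ge> 1" unfolding A_def using d c0 by simp
  note A = A1 A2
  have Kd: "K = (1+e6)*(e5-e3) + 2*d + 4" unfolding K_def M_def s_def by (simp add: algebra_simps)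
  have q1: "(1+e6)*e5 \<le> 113/100*(13/100)" using e6 e5 by (intro mult_mono) auto
  have q2: "(1+e6)*e3 \<le> 113/100*(13/100)" using e6 e3 by (intro mult_mono) auto
  have q3: "(1+e6)*e3 \<ge> 0" "(1+e6)*e5 \<ge> 0" using e6 e3 e5 by auto
  have "(1+e6)*(e5-e3) = (1+e6)*e5 - (1+e6)*e3" by (simp add: algebra_simps)
  with q1 q2 q3 have K: "K \<le> 441/100" "K \<ge> 0" using Kd d by (auto simp: algebra_simps)
  have KA: "K*A \<le> 441/100*(13293/10000)" using mult_mono[OF K(1) A(1)] K A by simp
  have KAT: "K*A/T \<le> 441/100*(13293/10000)/2" using KA T2 K A
    by (intro frac_le) auto
  have Nc0: "N*c0 \<le> 1013/100" using mult_mono[OF N1 c0(2)] N0 c0 by simp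
  have Nc0s: "N*c0/s \<le> 1013/100/2" using Nc0 s2 N0 c0
    by (intro frac_le) auto
  define Z where "Z = K*A/T + N*c0/s"
  have Z: "Z \<le> 7997/1000" "Z \<ge> 0" using KAT Nc0s K A T2 N0 c0 s2 Z_def by auto
  have epZ: "ep*Z \<ge> -72/100*(7997/1000)"
  proof -
    have "(-ep)*Z \<le> 72/100*(7997/1000)" using ep Z by (intro mult_mono) auto
    then show ?thesis by simp
  qed
  have Nb: "N*b6 \<ge> 92/100*(1844/1000)" using mult_mono[OF N0 b6(1)] N0 by simp
  have Nbb: "N*b6*(-bp) \<ge> 92/100*(1844/1000)*(35/10)" using mult_mono[OF Nb, of "35/10" "-bp"] bp N0 b6 by simp
  have W: "0 \<le> -N*b6*bp + ep*Z" using Nbb epZ by simp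
  have eq: "(d*ep*K/(s^2*T)) * A - N * ((2*d*b6*bp)/s^2 - 2*(d*c0)*ep/s^3) / 2
     = d/s^2 * (-N*b6*bp + ep*Z)"
  proof -
    have "s \<noteq> 0" "T \<noteq> 0" using s2 T2 by auto
    then show ?thesis unfolding Z_def by (simp add: field_simps power2_eq_square power3_eq_cube)
  qed
  show ?thesis unfolding eq using W d s2 by simp
qed


lemma quot_sqrt_deriv:
  fixes Nf Af :: "real \<Rightarrow> real"
  assumes dN: "(Nf has_real_derivative N') (at t)" and dA: "(Af has_real_derivative A') (at t)"
    and Apos: "Af t > 0" and C2: "C2 > 0"
    and key: "0 \<le> N' * Af t - Nf t * A' / 2"
  shows "\<exists>D. ((\<lambda>x. Nf x / (sqrt (Af x) * sqrt C2)) has_real_derivative D) (at t) \<and> D \<ge> 0"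
proof -
  have dS: "((\<lambda>x. sqrt (Af x)) has_real_derivative A' * (inverse (sqrt (Af t)) / 2)) (at t)"
    using DERIV_chain2[OF DERIV_real_sqrt[OF Apos] dA] by (simp add: mult.commute)
  have dS2: "((\<lambda>x. sqrt (Af x) * sqrt C2) has_real_derivative A' * (inverse (sqrt (Af t)) / 2) * sqrt C2) (at t)"
    using DERIV_cmult_right[OF dS, of "sqrt C2"] by simp
  have nz: "sqrt (Af t) * sqrt C2 \<noteq> 0" using Apos C2 by simp
  define D where "D = (N' * (sqrt (Af t) * sqrt C2) - Nf t * (A' * (inverse (sqrt (Af t)) / 2) * sqrt C2))
      / ((sqrt (Af t) * sqrt C2) * (sqrt (Af t) * sqrt C2))"
  have dd: "((\<lambda>x. Nf x / (sqrt (Af x) * sqrt C2)) has_real_derivative D) (at t)"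
    unfolding D_def by (rule DERIV_divide[OF dN dS2 nz])
  have sA: "sqrt (Af t) > 0" "sqrt (Af t) * sqrt (Af t) = Af t" using Apos by auto
  have sC: "sqrt C2 > 0" using C2 by auto
  have "D = (N' * Af t - Nf t * A' / 2) * sqrt C2 / (sqrt (Af t) * ((sqrt (Af t) * sqrt C2) * (sqrt (Af t) * sqrt C2)))"
    unfolding D_def using sA sC by (simp add: field_simps)
  moreover have "(N' * Af t - Nf t * A' / 2) * sqrt C2 / (sqrt (Af t) * ((sqrt (Af t) * sqrt C2) * (sqrt (Af t) * sqrt C2))) \<ge> 0"
    using key sA sC by simp
  ultimately show ?thesis using dd by auto
qed

lemma core_deriv:
  fixes \<eta> \<beta>f :: "real \<Rightarrow> real"
  assumes deta: "(\<eta> has_real_derivative ep) (at t)" and dbeta: "(\<beta>f has_real_derivative bp) (at t)"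
    and d: "0 \<le> d" "d \<le> 13/100"
    and e: "0 \<le> \<eta> t" "\<eta> t \<le> 13/100" and e3: "0 \<le> e3" "e3 \<le> 13/100"
    and e5: "0 \<le> e5" "e5 \<le> 13/100" and e6: "0 \<le> e6" "e6 \<le> 13/100"
    and bb: "0 \<le> \<beta>f t" "\<beta>f t \<le> 2" and b6: "1844/1000 \<le> b6" "b6 \<le> 2"
    and b3: "0 \<le> b3" and b5: "0 \<le> b5"
    and ep: "-72/100 \<le> ep" "ep \<le> 0" and bp: "bp \<le> -35/10"
  shows "\<exists>D. ((\<lambda>x. G d (\<eta> x) e3 e5 e6 (\<beta>f x) b3 b5 b6) has_real_derivative D) (at t) \<and> D \<ge> 0"
proof -
  define Nf where "Nf = (\<lambda>x. 1 + (d * ((1+\<eta> x)*(1+e5) + (1+e3)*(1+e6)) - 2*d*(d+2)) / ((2+\<eta> x+e6)*(2+e3+e5)))"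
  define Af where "Af = (\<lambda>x. 1 + (d^2 + 2*(1 + \<beta>f x*b6)*d) / (2+\<eta> x+e6)^2)"
  define C2 where "C2 = 1 + (d^2 + 2*(1 + b3*b5)*d) / (2+e3+e5)^2"
  have Geq: "(\<lambda>x. G d (\<eta> x) e3 e5 e6 (\<beta>f x) b3 b5 b6) = (\<lambda>x. Nf x / (sqrt (Af x) * sqrt C2))"
    unfolding G_def Nf_def Af_def C2_def by simp
  define e where "e = \<eta> t"
  define bb where "bb = \<beta>f t"
  define s where "s = 2+e+e6"
  define T where "T = 2+e3+e5"
  define M where "M = (1+e)*(1+e5)+(1+e3)*(1+e6) - 2*(d+2)"
  define c0 where "c0 = d + 2*(1+bb*b6)"
  define K where "K = (1+e5)* s - M"
  have s2: "s \<ge> 2" using e e6 s_def e_def by simp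
  have T2: "T \<ge> 2" using e3 e5 T_def by simp
  have dN: "(Nf has_real_derivative (d*ep*K/(s^2*T))) (at t)"
  proof -
    have "((\<lambda>x. 1 + (d * ((1+\<eta> x)*(1+e5) + (1+e3)*(1+e6)) - 2*d*(d+2)) / ((2+\<eta> x+e6)*(2+e3+e5)))
       has_real_derivative ((d*(ep*(1+e5))) * (s*T) - (d * ((1+e)*(1+e5) + (1+e3)*(1+e6)) - 2*d*(d+2)) * (ep*T))
         / ((s*T)*(s*T))) (at t)"
      using s2 T2 unfolding s_def T_def e_def
      by (auto intro!: derivative_eq_intros deta)
    moreover have "((d*(ep*(1+e5))) * (s*T) - (d * ((1+e)*(1+e5) + (1+e3)*(1+e6)) - 2*d*(d+2)) * (ep*T))
         / ((s*T)*(s*T)) = d*ep*K/(s^2*T)"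
    proof -
      have "s \<noteq> 0" "T \<noteq> 0" using s2 T2 by auto
      then show ?thesis unfolding K_def M_def by (simp add: field_simps power2_eq_square)
    qed
    ultimately show ?thesis unfolding Nf_def by simp
  qed
  have dA: "(Af has_real_derivative ((2*d*b6*bp)/s^2 - 2*(d*c0)*ep/s^3)) (at t)"
  proof -
    have "((\<lambda>x. 1 + (d^2 + 2*(1 + \<beta>f x*b6)*d) / (2+\<eta> x+e6)^2)
       has_real_derivative ((2*(bp*b6)*d) * (s^2) - (d^2 + 2*(1 + bb*b6)*d) * (2* s*ep)) / (s^2* s^2)) (at t)"
      using s2 unfolding s_def e_def bb_def
      by (auto intro!: derivative_eq_intros deta dbeta simp: power2_eq_square)
    moreover have "((2*(bp*b6)*d) * (s^2) - (d^2 + 2*(1 + bb*b6)*d) * (2* s*ep)) / (s^2* s^2)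
        = (2*d*b6*bp)/s^2 - 2*(d*c0)*ep/s^3"
      unfolding c0_def using s2 by (simp add: field_simps power2_eq_square power3_eq_cube)
    ultimately show ?thesis unfolding Af_def by simp
  qed
  have NA: "Nf t = 1 + d*M/(s*T)" "Af t = 1 + d*c0/s^2"
    unfolding Nf_def Af_def M_def s_def T_def c0_def e_def bb_def
    by (simp_all add: algebra_simps power2_eq_square)
  have key: "0 \<le> (d*ep*K/(s^2*T)) * Af t - Nf t * ((2*d*b6*bp)/s^2 - 2*(d*c0)*ep/s^3) / 2"
    unfolding NA K_def M_def s_def T_def c0_def
    by (rule core_ineq[OF d e[folded e_def] e3 e5 e6 bb[folded bb_def] b6 ep bp])
  have Apos: "Af t > 0" unfolding NA c0_def using d bb b6 s2 unfolding bb_def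
    by (intro add_pos_nonneg divide_nonneg_pos) auto
  have C2pos: "C2 > 0" unfolding C2_def using d b3 b5
    by (intro add_pos_nonneg divide_nonneg_nonneg) auto
  show ?thesis unfolding Geq by (rule quot_sqrt_deriv[OF dN dA Apos C2pos key])
qed



definition betaL :: "real \<Rightarrow> real" where
  "betaL t = ((2 - bfun (cn 10)) * bfun t - (2 - bfun (cn 9)) * bfun (cn 10)) / (bfun (cn 9) - bfun (cn 10))"

lemma b10_bounds: "18445/10000 \<le> bfun (cn 10) \<and> bfun (cn 10) \<le> 18447/10000"
proof -
  have c: "80901/100000 \<le> cn 10" "cn 10 \<le> 80903/100000" using c10_bounds by auto
  have "18445/10000 + 7 \<le> 16 / (cn 10 + 1)" using c by (subst le_divide_eq) auto
  moreover have "16 / (cn 10 + 1) \<le> 18447/10000 + 7" using c by (subst divide_le_eq) auto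
  ultimately show ?thesis unfolding bfun_def by auto
qed

lemma b9_bounds: "20595/10000 \<le> bfun (cn 9) \<and> bfun (cn 9) \<le> 20601/10000"
proof -
  have c: "766/1000 \<le> cn 9" "cn 9 \<le> 7661/10000" using c9_bounds by auto
  have "20595/10000 + 7 \<le> 16 / (cn 9 + 1)" using c by (subst le_divide_eq) auto
  moreover have "16 / (cn 9 + 1) \<le> 20601/10000 + 7" using c by (subst divide_le_eq) auto
  ultimately show ?thesis unfolding bfun_def by auto
qed

lemma betaL_deriv:
  assumes t: "cn 9 \<le> t" "t \<le> cn 10"
  shows "\<exists>bp. (betaL has_real_derivative bp) (at t) \<and> bp \<le> -35/10"
proof -
  define b9 where "b9 = bfun (cn 9)"
  define b10 where "b10 = bfun (cn 10)"
  have b9: "20595/10000 \<le> b9" "b9 \<le> 20601/10000" using b9_bounds b9_def by auto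
  have b10: "18445/10000 \<le> b10" "b10 \<le> 18447/10000" using b10_bounds b10_def by auto
  have c9: "766/1000 \<le> cn 9" using c9_bounds by auto
  have c10: "cn 10 \<le> 80903/100000" using c10_bounds by auto
  have tp: "t + 1 > 0" using t c9 by simp
  have dp: "b9 - b10 > 0" using b9 b10 by simp
  define bp where "bp = -(16*(2-b10)) / ((b9-b10)*(t+1)^2)"
  have db: "(bfun has_real_derivative (-(16 / (t+1)^2))) (at t)"
    unfolding bfun_def[abs_def] using tp
    by (auto intro!: derivative_eq_intros simp: power2_eq_square)
  have bL: "betaL = (\<lambda>t. ((2 - b10) * bfun t - (2 - b9) * b10) / (b9 - b10))"
    unfolding betaL_def[abs_def] b9_def b10_def by simp
  have "(betaL has_real_derivative ((2 - b10) * (-(16 / (t+1)^2)) / (b9 - b10))) (at t)"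
    unfolding bL using dp
    by (auto intro!: derivative_eq_intros db)
  moreover have "(2 - b10) * (-(16 / (t+1)^2)) / (b9 - b10) = bp"
    unfolding bp_def using tp dp by (simp add: field_simps)
  moreover have "bp \<le> -35/10"
  proof -
    have t1: "(t+1)^2 \<le> 180903/100000 * (180903/100000)"
      unfolding power2_eq_square using t c10 tp by (intro mult_mono) auto
    have "(b9-b10)*(t+1)^2 \<le> 2156/10000 * (180903/100000 * (180903/100000))"
      using b9 b10 t1 dp by (intro mult_mono) auto
    then have "35/10 * ((b9-b10)*(t+1)^2) \<le> 16*(2-b10)" using b10 by simp
    then have "35/10 \<le> 16*(2-b10) / ((b9-b10)*(t+1)^2)" using dp tp
      by (subst le_divide_eq) auto
    moreover have "bp = - (16*(2-b10) / ((b9-b10)*(t+1)^2))" unfolding bp_def by (simp only: minus_divide_left)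
    ultimately show ?thesis by linarith
  qed
  ultimately show ?thesis by blast
qed

lemma betaL_bounds:
  assumes t: "cn 9 \<le> t" "t \<le> cn 10"
  shows "bfun (cn 10) \<le> betaL t \<and> betaL t \<le> 2"
proof -
  define b9 where "b9 = bfun (cn 9)"
  define b10 where "b10 = bfun (cn 10)"
  have b9: "20595/10000 \<le> b9" "b9 \<le> 20601/10000" using b9_bounds b9_def by auto
  have b10: "18445/10000 \<le> b10" "b10 \<le> 18447/10000" using b10_bounds b10_def by auto
  have c9: "766/1000 \<le> cn 9" using c9_bounds by auto
  have dp: "b9 - b10 > 0" using b9 b10 by simp
  have "16 / (cn 10 + 1) \<le> 16 / (t + 1)" using t c9 by (intro divide_left_mono) auto
  then have bt1: "b10 \<le> bfun t" unfolding b10_def bfun_def by simp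
  have "16 / (t + 1) \<le> 16 / (cn 9 + 1)" using t c9 by (intro divide_left_mono) auto
  then have bt2: "bfun t \<le> b9" unfolding b9_def bfun_def by simp
  have e1: "betaL t - b10 = (2 - b10) * (bfun t - b10) / (b9 - b10)"
    unfolding betaL_def b9_def[symmetric] b10_def[symmetric] using dp by (simp add: field_simps)
  have e2: "2 - betaL t = (2 - b10) * (b9 - bfun t) / (b9 - b10)"
    unfolding betaL_def b9_def[symmetric] b10_def[symmetric] using dp by (simp add: field_simps)
  have "(2 - b10) * (bfun t - b10) / (b9 - b10) \<ge> 0" using bt1 b10 dp by simp
  moreover have "(2 - b10) * (b9 - bfun t) / (b9 - b10) \<ge> 0" using bt2 b10 dp by simp
  ultimately show ?thesis using e1 e2 b10_def by simp
qed

lemma beta_eq_betaL: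
  assumes t: "cn 9 \<le> t" "t \<le> cn 10"
  shows "beta t = betaL t"
proof (cases "cn 10 \<le> t")
  case True
  then have tt: "t = cn 10" using t by simp
  have dp: "bfun (cn 9) - bfun (cn 10) \<noteq> 0" using b9_bounds b10_bounds by simp
  have gen: "((2 - b) * b - (2 - a) * b) / (a - b) = b" if "a - b \<noteq> 0" for a b :: real
  proof -
    have "(2 - b) * b - (2 - a) * b = b * (a - b)" by (simp add: algebra_simps)
    then show ?thesis using that by simp
  qed
  have "beta (cn 10) = bfun (cn 10)" by (simp add: beta_def)
  moreover have "betaL (cn 10) = bfun (cn 10)" unfolding betaL_def using gen[OF dp] .
  ultimately show ?thesis using tt by simp
next
  case False
  then show ?thesis unfolding beta_def betaL_def by simp
qed

lemma beta_nonneg: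
  assumes t: "cn 9 \<le> t" "t < 1"
  shows "0 \<le> beta t"
proof (cases "cn 10 \<le> t")
  case True
  have "16/2 \<le> 16/(t+1)" using t c9_bounds by (intro divide_left_mono) auto
  then show ?thesis unfolding beta_def bfun_def using True by simp
next
  case False
  then have "beta t = betaL t" using beta_eq_betaL t by simp
  then show ?thesis using betaL_bounds[of t] t False b10_bounds by simp
qed



lemma G_sym1: "G d e2 e3 e5 e6 b2 b3 b5 b6 = G d e6 e5 e3 e2 b6 b5 b3 b2"
  unfolding G_def by (simp add: ac_simps)
lemma G_sym2: "G d e2 e3 e5 e6 b2 b3 b5 b6 = G d e3 e2 e6 e5 b3 b2 b6 b5"
  unfolding G_def by (simp add: ac_simps)
lemma G_sym3: "G d e2 e3 e5 e6 b2 b3 b5 b6 = G d e5 e6 e2 e3 b5 b6 b2 b3"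
  unfolding G_def by (simp add: ac_simps)

lemma main_k:
  fixes \<xi> d t0 z3 z5 z6 :: real and F :: "real \<Rightarrow> real"
  assumes x: "0 \<le> \<xi>" "\<xi> \<le> 13/100" and d: "0 \<le> d" "d \<le> 13/100"
    and t0: "cn 9 \<le> t0" "t0 \<le> cn 10" and z6: "cn 9 \<le> z6" "z6 \<le> cn 10"
    and z3: "cn 9 \<le> z3" "z3 < 1" and z5: "cn 9 \<le> z5" "z5 < 1"
    and F: "\<And>t. F t = G d (eta \<xi> t) (eta \<xi> z3) (eta \<xi> z5) (eta \<xi> z6) (beta t) (beta z3) (beta z5) (beta z6)"
  shows "\<exists>D. (F has_real_derivative D) (at t0 within {cn 9..cn 10}) \<and> D \<ge> 0"
proof -
  have c9: "766/1000 \<le> cn 9" using c9_bounds by auto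
  have c10: "cn 10 < 1" using c10_bounds by auto
  obtain ep where dep: "((\<lambda>y. eta \<xi> y) has_real_derivative ep) (at t0)" and ep: "-72/100 \<le> ep" "ep \<le> 0"
    using eta_deriv[OF x, of t0] t0 c9 c10 by auto
  obtain bp where dbp: "(betaL has_real_derivative bp) (at t0)" and bp: "bp \<le> -35/10"
    using betaL_deriv[OF t0] by auto
  have eb: "0 \<le> eta \<xi> z \<and> eta \<xi> z \<le> 13/100" if "cn 9 \<le> z" "z < 1" for z
    using eta_bounds[OF x, of z] that c9 by auto
  have b6: "1844/1000 \<le> beta z6" "beta z6 \<le> 2"
    using betaL_bounds[OF z6] beta_eq_betaL[OF z6] b10_bounds by auto
  have bt: "0 \<le> betaL t0" "betaL t0 \<le> 2"
    using betaL_bounds[OF t0] b10_bounds by auto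
  obtain D where dD: "((\<lambda>x. G d (eta \<xi> x) (eta \<xi> z3) (eta \<xi> z5) (eta \<xi> z6) (betaL x) (beta z3) (beta z5) (beta z6)) has_real_derivative D) (at t0)"
     and D: "D \<ge> 0"
  proof -
    have t0': "cn 9 \<le> t0" "t0 < 1" using t0 c10 by auto
    have z6': "cn 9 \<le> z6" "z6 < 1" using z6 c10 by auto
    note E0 = eb[OF t0'] and E3 = eb[OF z3] and E5 = eb[OF z5] and E6 = eb[OF z6']
    show ?thesis
      using core_deriv[OF dep dbp d conjunct1[OF E0] conjunct2[OF E0] conjunct1[OF E3] conjunct2[OF E3]
        conjunct1[OF E5] conjunct2[OF E5] conjunct1[OF E6] conjunct2[OF E6] bt b6
        beta_nonneg[OF z3] beta_nonneg[OF z5] ep bp] that by blast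
  qed
  have "(F has_real_derivative D) (at t0 within {cn 9..cn 10})"
  proof (rule has_field_derivative_transform_within[OF has_field_derivative_at_within[OF dD], of 1])
    show "t0 \<in> {cn 9..cn 10}" using t0 by simp
  next
    fix x assume "x \<in> {cn 9..cn 10}"
    then show "G d (eta \<xi> x) (eta \<xi> z3) (eta \<xi> z5) (eta \<xi> z6) (betaL x) (beta z3) (beta z5) (beta z6) = F x"
      using F beta_eq_betaL by simp
  qed simp
  then show ?thesis using D by blast
qed



theorem lemma4p4:
  fixes \<xi> :: real and y :: "nat \<Rightarrow> real" and j :: nat
  assumes "0 \<le> \<xi>" and "\<xi> \<le> 13/100"
    and "\<And>i. i \<in> {2,3,5,6} \<Longrightarrow> cn 9 \<le> y i \<and> y i < 1"
    and "j \<in> {2,3,5,6}"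
    and "y j \<le> cn 10" and "y (pairing j) \<le> cn 10"
  shows "\<forall>\<delta>\<in>{0..13/100}. \<forall>k\<in>{j, pairing j}.
           \<exists>D. ((\<lambda>t. psi \<xi> \<delta> (y(k := t))) has_real_derivative D) (at (y k) within {cn 9..cn 10})
               \<and> D \<ge> 0"
proof (intro ballI)
  fix \<delta> :: real and k :: nat assume d: "\<delta> \<in> {0..13/100}" and k: "k \<in> {j, pairing j}"
  have d': "0 \<le> \<delta>" "\<delta> \<le> 13/100" using d by auto
  note x = assms(1,2)
  have pp: "pairing (pairing j) = j" using assms(4) by (auto simp: pairing_def)
  have kk: "k \<in> {2,3,5,6}" using k assms(4) by (auto simp: pairing_def)
  have yk: "y k \<le> cn 10" "y (pairing k) \<le> cn 10" using k assms(5,6) pp by auto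
  have Y: "cn 9 \<le> y i" "y i < 1" if "i \<in> {2,3,5,6}" for i using assms(3)[OF that] by auto
  have Y2: "cn 9 \<le> y 2" "y 2 < 1" and Y3: "cn 9 \<le> y 3" "y 3 < 1"
    and Y5: "cn 9 \<le> y 5" "y 5 < 1" and Y6: "cn 9 \<le> y 6" "y 6 < 1" using Y by auto
  from kk show "\<exists>D. ((\<lambda>t. psi \<xi> \<delta> (y(k := t))) has_real_derivative D) (at (y k) within {cn 9..cn 10})
               \<and> D \<ge> 0"
  proof (elim insertE emptyE)
    assume k2: "k = 2"
    have p: "y 6 \<le> cn 10" "y 2 \<le> cn 10" using yk k2 by (auto simp: pairing_def)
    show ?thesis unfolding k2
      by (rule main_k[OF x d' Y2(1) p(2) Y6(1) p(1) Y3 Y5]) (simp add: psi_def)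
  next
    assume k3: "k = 3"
    have p: "y 5 \<le> cn 10" "y 3 \<le> cn 10" using yk k3 by (auto simp: pairing_def)
    show ?thesis unfolding k3
      by (rule main_k[OF x d' Y3(1) p(2) Y5(1) p(1) Y2 Y6]) (simp add: psi_def G_sym2[of \<delta> "eta \<xi> (y 2)"])
  next
    assume k5: "k = 5"
    have p: "y 3 \<le> cn 10" "y 5 \<le> cn 10" using yk k5 by (auto simp: pairing_def)
    show ?thesis unfolding k5
      by (rule main_k[OF x d' Y5(1) p(2) Y3(1) p(1) Y6 Y2]) (simp add: psi_def G_sym3[of \<delta> "eta \<xi> (y 2)"])
  next
    assume k6: "k = 6"
    have p: "y 2 \<le> cn 10" "y 6 \<le> cn 10" using yk k6 by (auto simp: pairing_def)
    show ?thesis unfolding k6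
      by (rule main_k[OF x d' Y6(1) p(2) Y2(1) p(1) Y5 Y3]) (simp add: psi_def G_sym1[of \<delta> "eta \<xi> (y 2)"])
  qed
qed


end
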